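(* Let $\Delta=\{z\in\mathbb{C}:|z|<1\}$, let $\beta\in\mathbb{C}$ with $\mathrm{Re}\{\beta\}>-1/2$ and set $\gamma=\bar\beta/(1+\beta)$. Let $f(z)=z|z|^{2\beta}h(z)\overline{g(z)}$ be a log-harmonic mapping in $\Delta$, where $h,g$ are analytic in $\Delta$, $h(0)\neq0$, $g(0)=1$. Then for all $z\in\Delta$, $$\frac{(1-|\gamma|^2)(1-|z|^2)}{(1+|\gamma||z|)^2}|f_z|^2\le J_f(z)\le\begin{cases}\dfrac{(1-|\gamma|^2)(1-|z|^2)}{(1-|\gamma||z|)^2}|f_z|^2, & |z|<|\gamma|,\\[2mm] |f_z|^2, & |z|\ge|\gamma|.\end{cases}$$
   Context: A mapping $f$ is log-harmonic in $\Delta$ if there is an analytic $w$ in $\Delta$ with $|w(z)|<1$ (the second complex dilatation of $f$) such that $\overline{f_{\bar z}}/\overline{f}=w\,f_z/f$. The Jacobian of such $f$ is $J_f(z)=|f_z|^2(1-|w(z)|^2)$. *)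

theory Defs
  imports "HOL-Analysis.Analysis"
begin

definition wirt_z :: "(complex \<Rightarrow> complex) \<Rightarrow> complex \<Rightarrow> complex" where
  "wirt_z f z = (frechet_derivative f (at z) 1 - \<i> * frechet_derivative f (at z) \<i>) / 2"

definition wirt_zbar :: "(complex \<Rightarrow> complex) \<Rightarrow> complex \<Rightarrow> complex" where
  "wirt_zbar f z = (frechet_derivative f (at z) 1 + \<i> * frechet_derivative f (at z) \<i>) / 2"

definition jacobian_c :: "(complex \<Rightarrow> complex) \<Rightarrow> complex \<Rightarrow> real" where
  "jacobian_c f z = (cmod (wirt_z f z))\<^sup>2 - (cmod (wirt_zbar f z))\<^sup>2"

definition log_harmonic_dil :: "complex set \<Rightarrow> (complex \<Rightarrow> complex) \<Rightarrow> (complex \<Rightarrow> complex) \<Rightarrow> bool" where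
  "log_harmonic_dil S f w \<longleftrightarrow>
     w holomorphic_on S \<and> (\<forall>z\<in>S. cmod (w z) < 1) \<and>
     (\<forall>z\<in>S. f z \<noteq> 0 \<longrightarrow> f differentiable (at z) \<and>
        cnj (wirt_zbar f z) / cnj (f z) = w z * wirt_z f z / f z)"

definition log_harmonic_on :: "complex set \<Rightarrow> (complex \<Rightarrow> complex) \<Rightarrow> bool" where
  "log_harmonic_on S f \<longleftrightarrow> (\<exists>w. log_harmonic_dil S f w)"

end

theory Submission
  imports Defs "HOL-Complex_Analysis.Complex_Analysis"
begin

lemma lnnorm_deriv:
  fixes z :: complex assumes "z \<noteq> 0"
  shows "((\<lambda>x. ln (norm x)) has_derivative (\<lambda>v. Re (v / z))) (at z)"
proof -
  have "((\<lambda>x. ln (norm x)) has_derivative (\<lambda>v. (1 / norm z) * (sgn z \<bullet> v))) (at z)"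
    using has_derivative_norm[OF assms] assms
    by (auto intro!: derivative_eq_intros simp: inner_commute field_simps)
  moreover have "(\<lambda>v. (1 / norm z) * (sgn z \<bullet> v)) = (\<lambda>v. Re (v / z))"
  proof -
    have nz: "cmod z * cmod z = Re z * Re z + Im z * Im z"
      using cmod_power2[of z] by (simp add: power2_eq_square)
    have "cmod z \<noteq> 0" using assms by simp
    then show ?thesis
      by (simp add: fun_eq_iff sgn_div_norm inner_complex_def Re_divide power2_eq_square field_simps nz)
  qed
  ultimately show ?thesis by simp
qed

lemma E_deriv:
  fixes z c :: complex assumes "z \<noteq> 0"
  shows "((\<lambda>x. complex_of_real (cmod x) powr c) has_derivative
     (\<lambda>v. (complex_of_real (cmod z) powr c) * c * ((v / z + cnj v / cnj z) / 2))) (at z)"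
proof -
  have a: "((\<lambda>x. c * of_real (ln (norm x))) has_derivative (\<lambda>v. c * of_real (Re (v / z)))) (at z)"
    using has_derivative_mult_right[OF has_derivative_of_real[OF lnnorm_deriv[OF assms]], of c] by simp
  have b: "(exp has_derivative (\<lambda>h. exp (c * of_real (ln (norm z))) * h)) (at (c * of_real (ln (norm z))))"
    using DERIV_exp[of "c * of_real (ln (norm z))"] by (simp add: has_field_derivative_def)
  have 1: "((\<lambda>x. exp (c * of_real (ln (norm x)))) has_derivative
     (\<lambda>v. exp (c * of_real (ln (norm z))) * (c * of_real (Re (v / z))))) (at z)"
    using has_derivative_compose[OF a b] by simp
  have 2: "\<And>x. x \<noteq> 0 \<Longrightarrow> complex_of_real (cmod x) powr c = exp (c * of_real (ln (norm x)))"
    by (simp add: powr_def Ln_of_real)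
  have 3: "(\<lambda>v. exp (c * of_real (ln (norm z))) * (c * of_real (Re (v / z))))
     = (\<lambda>v. (complex_of_real (cmod z) powr c) * c * ((v / z + cnj v / cnj z) / 2))"
  proof -
    have "\<And>x. complex_of_real (Re (x / z)) * 2 = x / z + cnj x / cnj z"
      using complex_add_cnj[of "x / z" for x] by (simp add: mult.commute)
    then show ?thesis using assms by (auto simp: fun_eq_iff 2)
  qed
  show ?thesis
    apply (rule has_derivative_transform_within_open[where s="-{0}", OF _ _ _ 2[symmetric]])
    using 1 3 assms by auto
qed

lemma wirt_from:
  assumes "(f has_derivative (\<lambda>v. A * v + B * cnj v)) (at z)"
  shows "wirt_z f z = A" "wirt_zbar f z = B"
proof -
  have e: "frechet_derivative f (at z) = (\<lambda>v. A * v + B * cnj v)"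
    using frechet_derivative_at[OF assms] by simp
  show "wirt_z f z = A" unfolding wirt_z_def e by (simp add: algebra_simps)
  show "wirt_zbar f z = B" unfolding wirt_zbar_def e by (simp add: algebra_simps)
qed

lemma f_deriv:
  fixes \<beta> :: complex and f h g :: "complex \<Rightarrow> complex" and z :: complex
  assumes "h holomorphic_on ball 0 1" and "g holomorphic_on ball 0 1"
    and feq: "\<forall>\<zeta>\<in>ball 0 1. f \<zeta> = \<zeta> * (complex_of_real (cmod \<zeta>)) powr (2 * \<beta>) * h \<zeta> * cnj (g \<zeta>)"
    and z: "z \<in> ball 0 1" "z \<noteq> 0"
  shows "(f has_derivative (\<lambda>v.
     ((complex_of_real (cmod z)) powr (2 * \<beta>) * cnj (g z) * ((1 + \<beta>) * h z + z * deriv h z)) * v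
   + ((complex_of_real (cmod z)) powr (2 * \<beta>) * h z * (\<beta> * z * cnj (g z) / cnj z + z * cnj (deriv g z))) * cnj v)) (at z)"
proof -
  define E where "E = (complex_of_real (cmod z)) powr (2 * \<beta>)"
  have dh: "(h has_derivative (\<lambda>v. deriv h z * v)) (at z)"
    using assms(1) z(1) holomorphic_derivI[of h "ball 0 1" z] 
    by (simp add: has_field_derivative_def)
  have dg0: "(g has_derivative (\<lambda>v. deriv g z * v)) (at z)"
    using assms(2) z(1) holomorphic_derivI[of g "ball 0 1" z] 
    by (simp add: has_field_derivative_def)
  have dg: "((\<lambda>x. cnj (g x)) has_derivative (\<lambda>v. cnj (deriv g z * v))) (at z)"
    using has_derivative_cnj[OF dg0] .
  have dE: "((\<lambda>x. complex_of_real (cmod x) powr (2*\<beta>)) has_derivative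
     (\<lambda>v. E * (2*\<beta>) * ((v / z + cnj v / cnj z) / 2))) (at z)"
    using E_deriv[OF z(2)] unfolding E_def .
  have did: "((\<lambda>x. x) has_derivative (\<lambda>v. v)) (at z)" by (rule has_derivative_ident)
  have d: "((\<lambda>x. x * (complex_of_real (cmod x)) powr (2 * \<beta>) * h x * cnj (g x)) has_derivative
     (\<lambda>v. z * E * h z * cnj (deriv g z * v) + (z * E * (deriv h z * v) + (z * (E * (2*\<beta>) * ((v / z + cnj v / cnj z) / 2)) + v * E) * h z) * cnj (g z))) (at z)"
    using has_derivative_mult[OF has_derivative_mult[OF has_derivative_mult[OF did dE] dh] dg]
    unfolding E_def by simp
  have eqf: "(\<lambda>v. z * E * h z * cnj (deriv g z * v) + (z * E * (deriv h z * v) + (z * (E * (2*\<beta>) * ((v / z + cnj v / cnj z) / 2)) + v * E) * h z) * cnj (g z))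
     = (\<lambda>v. (E * cnj (g z) * ((1 + \<beta>) * h z + z * deriv h z)) * v
   + (E * h z * (\<beta> * z * cnj (g z) / cnj z + z * cnj (deriv g z))) * cnj v)"
    using z(2) by (auto simp: fun_eq_iff field_simps)
  show ?thesis
    apply (rule has_derivative_transform_within_open[where s="ball 0 1", OF _ _ z(1)])
    using d eqf feq unfolding E_def by auto
qed

lemma PQ_lemma:
  fixes \<beta> :: complex and f h g w :: "complex \<Rightarrow> complex"
  assumes hh: "h holomorphic_on ball 0 1" and gh: "g holomorphic_on ball 0 1"
    and h0: "h 0 \<noteq> 0" and g0: "g 0 = 1"
    and feq: "\<forall>\<zeta>\<in>ball 0 1. f \<zeta> = \<zeta> * (complex_of_real (cmod \<zeta>)) powr (2 * \<beta>) * h \<zeta> * cnj (g \<zeta>)"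
    and lh: "log_harmonic_dil (ball 0 1) f w"
    and u: "u \<in> ball 0 1"
  shows "cnj \<beta> * g u * h u + u * deriv g u * h u = w u * ((1 + \<beta>) * g u * h u + u * deriv h u * g u)"
proof -
  define P where "P = (\<lambda>z. cnj \<beta> * g z * h z + z * deriv g z * h z)"
  define Q where "Q = (\<lambda>z. (1 + \<beta>) * g z * h z + z * deriv h z * g z)"
  have wh: "w holomorphic_on ball 0 1" using lh unfolding log_harmonic_dil_def by auto
  have dh: "deriv h holomorphic_on ball 0 1" using hh by (simp add: holomorphic_deriv)
  have dg: "deriv g holomorphic_on ball 0 1" using gh by (simp add: holomorphic_deriv)
  have holR: "(\<lambda>z. P z - w z * Q z) holomorphic_on ball 0 1"
    unfolding P_def Q_def using hh gh dh dg wh by (intro holomorphic_intros) auto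
  have good: "P z - w z * Q z = 0" if z: "z \<in> ball 0 1" "z \<noteq> 0" "h z \<noteq> 0" "g z \<noteq> 0" for z
  proof -
    define E where "E = (complex_of_real (cmod z)) powr (2 * \<beta>)"
    have E0: "E \<noteq> 0" unfolding E_def using z(2) by (simp add: powr_def)
    have fz: "f z = z * E * h z * cnj (g z)" using feq z(1) unfolding E_def by auto
    have fz0: "f z \<noteq> 0" using fz E0 z by simp
    have rel: "cnj (wirt_zbar f z) / cnj (f z) = w z * wirt_z f z / f z"
      using lh fz0 z(1) unfolding log_harmonic_dil_def by auto
    note D = f_deriv[OF hh gh feq z(1) z(2)]
    have A: "wirt_z f z = E * cnj (g z) * ((1 + \<beta>) * h z + z * deriv h z)"
      using wirt_from(1)[OF D] unfolding E_def .
    have B: "wirt_zbar f z = E * h z * (\<beta> * z * cnj (g z) / cnj z + z * cnj (deriv g z))"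
      using wirt_from(2)[OF D] unfolding E_def .
    have "cnj (E * h z * (\<beta> * z * cnj (g z) / cnj z + z * cnj (deriv g z))) / cnj (z * E * h z * cnj (g z))
       = w z * (E * cnj (g z) * ((1 + \<beta>) * h z + z * deriv h z)) / (z * E * h z * cnj (g z))"
      using rel A B fz by simp
    moreover define X where "X = cnj E * cnj (h z) * cnj z"
    moreover have X0: "X \<noteq> 0" using E0 z unfolding X_def by simp
    moreover have "cnj (E * h z * (\<beta> * z * cnj (g z) / cnj z + z * cnj (deriv g z))) = X * (cnj \<beta> * g z / z + deriv g z)"
      unfolding X_def using z by (simp add: field_simps)
    moreover have "cnj (z * E * h z * cnj (g z)) = X * g z" unfolding X_def by simp
    moreover have "w z * (E * cnj (g z) * ((1 + \<beta>) * h z + z * deriv h z)) / (z * E * h z * cnj (g z))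
        = w z * ((1 + \<beta>) * h z + z * deriv h z) / (z * h z)"
      using E0 z by simp
    ultimately have "(cnj \<beta> * g z / z + deriv g z) / g z = w z * ((1 + \<beta>) * h z + z * deriv h z) / (z * h z)"
      by simp
    then have "z * (P z - w z * Q z) = 0" unfolding P_def Q_def using z by (simp add: field_simps)
    then show ?thesis using z by simp
  qed
  have ch: "isCont (\<lambda>z. h z * g z) 0"
    using hh gh by (intro continuous_intros holomorphic_on_imp_continuous_on[THEN continuous_on_interior]) (auto simp: interior_open)
  have "\<forall>\<^sub>F z in at 0. h z * g z \<noteq> 0"
    using ch h0 g0 unfolding isCont_def by (intro tendsto_imp_eventually_ne) auto
  then obtain d where d: "d > 0" "\<And>z. z \<noteq> 0 \<Longrightarrow> dist z 0 < d \<Longrightarrow> h z * g z \<noteq> 0"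
    unfolding eventually_at by auto
  define U where "U = ball 0 (min d 1) - {0::complex}"
  have U: "U \<subseteq> ball 0 1" unfolding U_def by auto
  have lim: "0 islimpt U"
  proof -
    have "(0::complex) islimpt ball 0 (min d 1)" using d(1) by (simp add: islimpt_ball)
    then show ?thesis using islimpt_punctured[of 0 "ball 0 (min d 1)"] unfolding U_def by blast
  qed
  have "P u - w u * Q u = 0"
    apply (rule analytic_continuation[OF holR _ _ U _ lim])
    using good U d u unfolding U_def by auto
  then show ?thesis unfolding P_def Q_def by simp
qed

lemma ray_limit:
  fixes \<beta> :: complex and f h g L :: "complex \<Rightarrow> complex" and v :: complex
  assumes hh: "h holomorphic_on ball 0 1" and gh: "g holomorphic_on ball 0 1"
    and h0: "h 0 \<noteq> 0" and g0: "g 0 = 1"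
    and feq: "\<forall>\<zeta>\<in>ball 0 1. f \<zeta> = \<zeta> * (complex_of_real (cmod \<zeta>)) powr (2 * \<beta>) * h \<zeta> * cnj (g \<zeta>)"
    and L: "(f has_derivative L) (at 0)"
    and v: "norm v = 1"
  shows "((\<lambda>t. complex_of_real t powr (2 * \<beta>)) \<longlongrightarrow> L v / (v * h 0)) (at_right 0)"
proof -
  have f0: "f 0 = 0" using feq by auto
  have bl: "bounded_linear L" using L by (rule has_derivative_bounded_linear)
  have lim0: "((\<lambda>y. (f y - f 0 - L (y - 0)) /\<^sub>R norm (y - 0)) \<longlongrightarrow> 0) (at 0)"
    using L by (simp add: has_derivative_at_within)
  have fl: "filterlim (\<lambda>t. complex_of_real t * v) (at 0) (at_right (0::real))"
  proof (rule filterlim_atI)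
    show "((\<lambda>t. complex_of_real t * v) \<longlongrightarrow> 0) (at_right 0)"
      by (auto intro!: tendsto_eq_intros)
    show "\<forall>\<^sub>F t in at_right 0. complex_of_real t * v \<noteq> 0"
    proof -
      have "v \<noteq> 0" using v by auto
      then show ?thesis by (simp add: eventually_at_filter)
    qed
  qed
  have lim1: "((\<lambda>t. (f (complex_of_real t * v) - L (complex_of_real t * v)) /\<^sub>R norm (complex_of_real t * v)) \<longlongrightarrow> 0) (at_right 0)"
    using filterlim_compose[OF lim0 fl] f0 by simp
  have ev: "\<forall>\<^sub>F t in at_right 0. (f (complex_of_real t * v) - L (complex_of_real t * v)) /\<^sub>R norm (complex_of_real t * v)
      = complex_of_real t powr (2 * \<beta>) * (v * h (complex_of_real t * v) * cnj (g (complex_of_real t * v))) - L v"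
  proof -
    have "\<forall>\<^sub>F t in at_right (0::real). t > 0 \<and> t < 1"
      by (simp add: eventually_at_right_less eventually_conj eventually_at_right_field) (auto intro: exI[of _ 1])
    then show ?thesis
    proof (rule eventually_mono)
      fix t :: real assume t: "t > 0 \<and> t < 1"
      have n: "norm (complex_of_real t * v) = t" using t v by (simp add: norm_mult)
      have inb: "complex_of_real t * v \<in> ball 0 1" using n t by simp
      have Lt: "L (complex_of_real t * v) = complex_of_real t * L v"
        using linear_scale[OF bounded_linear.linear[OF bl], of t v] by (simp add: scaleR_conv_of_real)
      show "(f (complex_of_real t * v) - L (complex_of_real t * v)) /\<^sub>R norm (complex_of_real t * v)
      = complex_of_real t powr (2 * \<beta>) * (v * h (complex_of_real t * v) * cnj (g (complex_of_real t * v))) - L v"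
        using feq inb n Lt t by (simp add: scaleR_conv_of_real field_simps)
    qed
  qed
  have lim2: "((\<lambda>t. complex_of_real t powr (2 * \<beta>) * (v * h (complex_of_real t * v) * cnj (g (complex_of_real t * v))) - L v) \<longlongrightarrow> 0) (at_right 0)"
    using tendsto_cong[OF ev] lim1 by simp
  then have lim3: "((\<lambda>t. complex_of_real t powr (2 * \<beta>) * (v * h (complex_of_real t * v) * cnj (g (complex_of_real t * v)))) \<longlongrightarrow> L v) (at_right 0)"
    using tendsto_add[OF lim2 tendsto_const[of "L v"]] by simp
  have ch: "isCont h 0" and cg: "isCont g 0"
    using hh gh by (auto intro!: holomorphic_on_imp_continuous_on[THEN continuous_on_interior] simp: interior_open)
  have lim4: "((\<lambda>t. v * h (complex_of_real t * v) * cnj (g (complex_of_real t * v))) \<longlongrightarrow> v * h 0) (at_right 0)"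
  proof -
    have a: "((\<lambda>t. complex_of_real t * v) \<longlongrightarrow> 0) (at_right (0::real))" by (auto intro!: tendsto_eq_intros)
    have "((\<lambda>t. h (complex_of_real t * v)) \<longlongrightarrow> h 0) (at_right 0)"
      using isCont_tendsto_compose[OF ch a] .
    moreover have "((\<lambda>t. g (complex_of_real t * v)) \<longlongrightarrow> g 0) (at_right 0)"
      using isCont_tendsto_compose[OF cg a] .
    ultimately show ?thesis using g0 by (auto intro!: tendsto_eq_intros)
  qed
  have nz: "v * h 0 \<noteq> 0" using v h0 by auto
  define H where "H = (\<lambda>t. v * h (complex_of_real t * v) * cnj (g (complex_of_real t * v)))"
  have q: "((\<lambda>t. complex_of_real t powr (2 * \<beta>) * H t / H t) \<longlongrightarrow> L v / (v * h 0)) (at_right 0)"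
    using tendsto_divide[OF lim3 lim4 nz] unfolding H_def .
  have "\<forall>\<^sub>F t in at_right 0. H t \<noteq> 0"
    using tendsto_imp_eventually_ne[OF lim4 nz] unfolding H_def .
  then have e: "\<forall>\<^sub>F t in at_right 0. complex_of_real t powr (2 * \<beta>) * H t / H t = complex_of_real t powr (2 * \<beta>)"
    by (rule eventually_mono) simp
  show ?thesis using q tendsto_cong[OF e] by simp
qed

lemma zero_case:
  fixes \<beta> :: complex and f h g :: "complex \<Rightarrow> complex"
  assumes hh: "h holomorphic_on ball 0 1" and gh: "g holomorphic_on ball 0 1"
    and h0: "h 0 \<noteq> 0" and g0: "g 0 = 1"
    and feq: "\<forall>\<zeta>\<in>ball 0 1. f \<zeta> = \<zeta> * (complex_of_real (cmod \<zeta>)) powr (2 * \<beta>) * h \<zeta> * cnj (g \<zeta>)"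
    and df: "f differentiable (at 0)"
  shows "wirt_zbar f 0 = 0" "\<beta> \<noteq> 0 \<Longrightarrow> wirt_z f 0 = 0"
proof -
  obtain L where L: "(f has_derivative L) (at 0)" using df unfolding differentiable_def by auto
  have fr: "frechet_derivative f (at 0) = L" using frechet_derivative_at[OF L] by simp
  have l1: "((\<lambda>t. complex_of_real t powr (2 * \<beta>)) \<longlongrightarrow> L 1 / (1 * h 0)) (at_right 0)"
    by (rule ray_limit[OF hh gh h0 g0 feq L]) simp
  have li: "((\<lambda>t. complex_of_real t powr (2 * \<beta>)) \<longlongrightarrow> L \<i> / (\<i> * h 0)) (at_right 0)"
    by (rule ray_limit[OF hh gh h0 g0 feq L]) simp
  have "L 1 / (1 * h 0) = L \<i> / (\<i> * h 0)"
    using tendsto_unique[OF _ l1 li] by simp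
  then have Li: "L \<i> = \<i> * L 1" using h0 by (simp add: field_simps)
  show "wirt_zbar f 0 = 0" unfolding wirt_zbar_def fr Li by simp
  have wz: "wirt_z f 0 = L 1" unfolding wirt_z_def fr Li by simp
  assume b: "\<beta> \<noteq> 0"
  define c where "c = L 1 / h 0"
  have lc: "((\<lambda>t. complex_of_real t powr (2 * \<beta>)) \<longlongrightarrow> c) (at_right 0)"
    using l1 unfolding c_def by simp
  have "c = 0"
  proof (rule ccontr)
    assume c0: "c \<noteq> 0"
    define s where "s = 1 / (4 * cmod \<beta>)"
    have sp: "s > 0" using b unfolding s_def by simp
    define k where "k = exp s"
    have kp: "k > 0" unfolding k_def by simp
    have fl: "filterlim (\<lambda>t. k * t) (at_right 0) (at_right (0::real))"
    proof (rule filterlim_at_withinI)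
      show "filterlim (\<lambda>t. k * t) (nhds 0) (at_right 0)"
        by (auto intro!: tendsto_eq_intros)
      show "\<forall>\<^sub>F x in at_right 0. k * x \<in> {0<..} - {0}"
        using kp by (simp add: eventually_at_filter)
    qed
    have lk: "((\<lambda>t. complex_of_real (k * t) powr (2 * \<beta>)) \<longlongrightarrow> c) (at_right 0)"
      using filterlim_compose[OF lc fl] by simp
    have K: "complex_of_real k powr (2 * \<beta>) = exp (2 * \<beta> * of_real s)"
      unfolding k_def by (simp add: powr_def Ln_of_real)
    have pt: "(complex_of_real k * complex_of_real t) powr (2 * \<beta>)
         = complex_of_real k powr (2 * \<beta>) * complex_of_real t powr (2 * \<beta>)" if "t > 0" for t
      by (rule powr_times_real) (use kp that in auto)
    have ev: "\<forall>\<^sub>F t in at_right (0::real). complex_of_real (k * t) powr (2 * \<beta>)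
         = complex_of_real k powr (2 * \<beta>) * complex_of_real t powr (2 * \<beta>)"
      unfolding eventually_at_filter of_real_mult by (rule always_eventually) (auto intro: pt)
    have A: "((\<lambda>t. complex_of_real k powr (2 * \<beta>) * complex_of_real t powr (2 * \<beta>)) \<longlongrightarrow> c) (at_right 0)"
      using tendsto_cong[OF ev] lk by simp
    have B: "((\<lambda>t. complex_of_real k powr (2 * \<beta>) * complex_of_real t powr (2 * \<beta>)) \<longlongrightarrow> complex_of_real k powr (2 * \<beta>) * c) (at_right 0)"
      using tendsto_mult[OF tendsto_const lc] .
    have "complex_of_real k powr (2 * \<beta>) * c = c"
      using tendsto_unique[OF trivial_limit_at_right_real B A] .
    then have e1: "exp (2 * \<beta> * of_real s) = 1" using c0 K by simp
    have n: "cmod (2 * \<beta> * of_real s) = 1/2"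
    proof -
      have "cmod (2 * \<beta> * of_real s) = 2 * cmod \<beta> * s" unfolding norm_mult using sp by simp
      also have "\<dots> = 1/2" using b unfolding s_def by (simp add: field_simps)
      finally show ?thesis .
    qed
    from e1 obtain m :: int where re: "Re (2 * \<beta> * of_real s) = 0" and im: "Im (2 * \<beta> * of_real s) = of_int (2 * m) * pi"
      unfolding exp_eq_1 by blast
    have "\<bar>of_int (2 * m) * pi\<bar> = 1/2" using cmod_eq_Im[OF re] n im by simp
    then have m2: "2 * \<bar>real_of_int m\<bar> * pi = 1/2" by (simp add: abs_mult)
    show False
    proof (cases "m = 0")
      case True then show False using m2 by simp
    next
      case False
      then have "\<bar>real_of_int m\<bar> \<ge> 1" by linarith
      then have "2 * \<bar>real_of_int m\<bar> * pi \<ge> 2 * 1 * 3" using pi_gt3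
        by (intro mult_mono) auto
      then show False using m2 by simp
    qed
  qed
  then show "wirt_z f 0 = 0" using wz h0 unfolding c_def by simp
qed

lemma real_bounds:
  fixes a p r D :: real
  assumes a: "0 \<le> a" "a < 1" and p: "0 \<le> p" "p \<le> r" and r: "r < 1"
    and D: "1 - a * p \<le> D" "D \<le> 1 + a * p"
  shows "(1 - a\<^sup>2) * (1 - r\<^sup>2) / (1 + a * r)\<^sup>2 \<le> (1 - a\<^sup>2) * (1 - p\<^sup>2) / D\<^sup>2"
    and "r < a \<Longrightarrow> (1 - a\<^sup>2) * (1 - p\<^sup>2) / D\<^sup>2 \<le> (1 - a\<^sup>2) * (1 - r\<^sup>2) / (1 - a * r)\<^sup>2"
proof -
  have ap: "a * p \<le> a * r" using a p by (simp add: mult_left_mono)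
  have ar1: "a * r < 1" using a p r
  proof -
    have "a * r \<le> 1 * r" using a p by (intro mult_right_mono) auto
    then show ?thesis using r by simp
  qed
  have ap1: "a * p < 1" using ap ar1 by simp
  have Dp: "D > 0" using D ap1 by simp
  have aa: "0 \<le> 1 - a\<^sup>2" using a by (simp add: power_le_one)
  have pp: "0 \<le> 1 - p\<^sup>2" using p r by (simp add: power_le_one)
  have rr: "0 \<le> 1 - r\<^sup>2" using p r by (simp add: power_le_one)
  have "(1 - r\<^sup>2) / (1 + a * r)\<^sup>2 \<le> (1 - p\<^sup>2) / (1 + a * p)\<^sup>2"
  proof (rule frac_le)
    show "0 \<le> 1 - p\<^sup>2" by (rule pp)
    show "1 - r\<^sup>2 \<le> 1 - p\<^sup>2" using p by (simp add: power_mono)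
    have "0 \<le> a * p" using a p by simp
    then show "0 < (1 + a * p)\<^sup>2" by (intro zero_less_power) linarith
    show "(1 + a * p)\<^sup>2 \<le> (1 + a * r)\<^sup>2" using a p ap by (intro power_mono) auto
  qed
  also have "\<dots> \<le> (1 - p\<^sup>2) / D\<^sup>2"
    using D Dp pp by (intro divide_left_mono power_mono mult_pos_pos) auto
  finally have "(1 - a\<^sup>2) * ((1 - r\<^sup>2) / (1 + a * r)\<^sup>2) \<le> (1 - a\<^sup>2) * ((1 - p\<^sup>2) / D\<^sup>2)"
    by (rule mult_left_mono[OF _ aa])
  then show "(1 - a\<^sup>2) * (1 - r\<^sup>2) / (1 + a * r)\<^sup>2 \<le> (1 - a\<^sup>2) * (1 - p\<^sup>2) / D\<^sup>2"
    by simp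
  assume ra: "r < a"
  have "(1 - p\<^sup>2) / D\<^sup>2 \<le> (1 - p\<^sup>2) / (1 - a * p)\<^sup>2"
    using D Dp pp ap1 by (intro divide_left_mono power_mono mult_pos_pos) auto
  also have "\<dots> \<le> (1 - r\<^sup>2) / (1 - a * r)\<^sup>2"
  proof -
    have eq: "(1 - r\<^sup>2) * (1 - a * p)\<^sup>2 - (1 - p\<^sup>2) * (1 - a * r)\<^sup>2
       = (r - p) * ((a - p) * (1 - a * r) + (a - r) * (1 - a * p))"
      by (simp add: power2_eq_square algebra_simps)
    have "0 \<le> (r - p) * ((a - p) * (1 - a * r) + (a - r) * (1 - a * p))"
      using p ra ar1 ap1 by (intro mult_nonneg_nonneg add_nonneg_nonneg) auto
    then have "(1 - p\<^sup>2) * (1 - a * r)\<^sup>2 \<le> (1 - r\<^sup>2) * (1 - a * p)\<^sup>2" using eq by simp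
    moreover have "0 < (1 - a * r)\<^sup>2" "0 < (1 - a * p)\<^sup>2" using ar1 ap1 by auto
    ultimately show ?thesis by (simp add: divide_simps)
  qed
  finally have "(1 - a\<^sup>2) * ((1 - p\<^sup>2) / D\<^sup>2) \<le> (1 - a\<^sup>2) * ((1 - r\<^sup>2) / (1 - a * r)\<^sup>2)"
    by (rule mult_left_mono[OF _ aa])
  then show "(1 - a\<^sup>2) * (1 - p\<^sup>2) / D\<^sup>2 \<le> (1 - a\<^sup>2) * (1 - r\<^sup>2) / (1 - a * r)\<^sup>2"
    by simp
qed

lemma moeb_id:
  fixes a u :: complex
  shows "(cmod (1 - cnj a * u))\<^sup>2 - (cmod (u - a))\<^sup>2 = (1 - (cmod a)\<^sup>2) * (1 - (cmod u)\<^sup>2)"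
  by (simp only: cmod_power2) (simp add: power2_eq_square algebra_simps)

lemma sp_bound:
  fixes w :: "complex \<Rightarrow> complex" and \<gamma> z :: complex
  assumes wh: "w holomorphic_on ball 0 1" and wl: "\<forall>z\<in>ball 0 1. cmod (w z) < 1"
    and w0: "w 0 = \<gamma>" and z: "z \<in> ball 0 1"
  shows "(1 - (cmod \<gamma>)\<^sup>2) * (1 - (cmod z)\<^sup>2) / (1 + cmod \<gamma> * cmod z)\<^sup>2 \<le> 1 - (cmod (w z))\<^sup>2"
    and "cmod z < cmod \<gamma> \<Longrightarrow> 1 - (cmod (w z))\<^sup>2 \<le> (1 - (cmod \<gamma>)\<^sup>2) * (1 - (cmod z)\<^sup>2) / (1 - cmod \<gamma> * cmod z)\<^sup>2"
proof -
  have ga: "cmod \<gamma> < 1" using wl w0 by auto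
  have den: "1 - cnj \<gamma> * u \<noteq> 0" if "cmod u < 1" for u
  proof
    assume "1 - cnj \<gamma> * u = 0"
    then have "cmod (cnj \<gamma> * u) = 1" by (metis eq_iff_diff_eq_0 norm_one)
    moreover have "cmod (cnj \<gamma> * u) < 1"
    proof -
      have "cmod \<gamma> * cmod u \<le> cmod \<gamma> * 1" using that by (intro mult_left_mono) auto
      then show ?thesis using ga by (simp add: norm_mult)
    qed
    ultimately show False by simp
  qed
  define F where "F = (\<lambda>x. (w x - \<gamma>) / (1 - cnj \<gamma> * w x))"
  have Fh: "F holomorphic_on ball 0 1" unfolding F_def
    using wh wl den by (intro holomorphic_intros) auto
  have F0: "F 0 = 0" unfolding F_def using w0 by simp
  have lt: "cmod (u - \<gamma>) < cmod (1 - cnj \<gamma> * u)" if "cmod u < 1" for u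
  proof -
    have "0 < (1 - (cmod \<gamma>)\<^sup>2) * (1 - (cmod u)\<^sup>2)"
      using ga that by (intro mult_pos_pos) (auto simp: power_less_one_iff abs_square_less_1)
    then have "(cmod (u - \<gamma>))\<^sup>2 < (cmod (1 - cnj \<gamma> * u))\<^sup>2" using moeb_id[of \<gamma> u] by simp
    then show ?thesis by (simp add: power_less_imp_less_base)
  qed
  have Fl: "cmod (F x) < 1" if "cmod x < 1" for x
  proof -
    have wx: "cmod (w x) < 1" using wl that by simp
    show ?thesis unfolding F_def norm_divide using lt[OF wx] den[OF wx] by simp
  qed
  have Fz: "cmod (F z) \<le> cmod z"
    using Schwarz_Lemma(1)[OF Fh F0 Fl] z by simp
  define u where "u = w z"
  define \<xi> where "\<xi> = F z"
  define M where "M = cmod (1 - cnj \<gamma> * u)"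
  define D where "D = cmod (1 + cnj \<gamma> * \<xi>)"
  have u1: "cmod u < 1" using wl z unfolding u_def by simp
  have M0: "M > 0" using den[OF u1] unfolding M_def by simp
  have gg: "cnj \<gamma> * \<gamma> = of_real ((cmod \<gamma>)\<^sup>2)" by (metis complex_norm_square mult.commute)
  have "1 + cnj \<gamma> * \<xi> = (1 - cnj \<gamma> * \<gamma>) / (1 - cnj \<gamma> * u)"
    unfolding \<xi>_def F_def u_def[symmetric] using den[OF u1] by (simp add: field_simps)
  moreover have "cmod (1 - cnj \<gamma> * \<gamma>) = 1 - (cmod \<gamma>)\<^sup>2"
  proof -
    have e: "1 - cnj \<gamma> * \<gamma> = complex_of_real (1 - (cmod \<gamma>)\<^sup>2)" unfolding gg by simp
    have "0 \<le> 1 - (cmod \<gamma>)\<^sup>2" using ga by (simp add: abs_square_le_1)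
    then show ?thesis unfolding e norm_of_real by (rule abs_of_nonneg)
  qed
  ultimately have De: "D = (1 - (cmod \<gamma>)\<^sup>2) / M"
    unfolding D_def M_def by (simp add: norm_divide)
  have pe: "1 - (cmod \<xi>)\<^sup>2 = (1 - (cmod \<gamma>)\<^sup>2) * (1 - (cmod u)\<^sup>2) / M\<^sup>2"
  proof -
    have "cmod \<xi> = cmod (u - \<gamma>) / M" unfolding \<xi>_def F_def u_def[symmetric] M_def norm_divide ..
    then have "1 - (cmod \<xi>)\<^sup>2 = (M\<^sup>2 - (cmod (u - \<gamma>))\<^sup>2) / M\<^sup>2"
      using M0 by (simp add: field_simps power_divide power_mult_distrib[symmetric])
    then show ?thesis using moeb_id[of \<gamma> u] unfolding M_def by simp
  qed
  have key: "1 - (cmod u)\<^sup>2 = (1 - (cmod \<gamma>)\<^sup>2) * (1 - (cmod \<xi>)\<^sup>2) / D\<^sup>2"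
  proof -
    have a0: "1 - (cmod \<gamma>)\<^sup>2 > 0" using ga by (simp add: abs_square_less_1)
    have gen: "X = A * (A * X / M\<^sup>2) / (A / M)\<^sup>2" if "A \<noteq> 0" "M \<noteq> 0" for A M X :: real
      using that by (simp add: field_simps power2_eq_square)
    show ?thesis unfolding pe De using gen[of "1 - (cmod \<gamma>)\<^sup>2" M "1 - (cmod u)\<^sup>2"] a0 M0 by simp
  qed
  have D1: "D \<le> 1 + cmod \<gamma> * cmod \<xi>" unfolding D_def
    using norm_triangle_ineq[of 1 "cnj \<gamma> * \<xi>"] by (simp add: norm_mult)
  have D2: "1 - cmod \<gamma> * cmod \<xi> \<le> D" unfolding D_def
    using norm_triangle_ineq2[of 1 "- (cnj \<gamma> * \<xi>)"] by (simp add: norm_mult)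
  have hyps: "0 \<le> cmod \<gamma>" "cmod \<gamma> < 1" "0 \<le> cmod \<xi>" "cmod \<xi> \<le> cmod z" "cmod z < 1"
    using ga Fz z unfolding \<xi>_def by auto
  show "(1 - (cmod \<gamma>)\<^sup>2) * (1 - (cmod z)\<^sup>2) / (1 + cmod \<gamma> * cmod z)\<^sup>2 \<le> 1 - (cmod (w z))\<^sup>2"
    using real_bounds(1)[OF hyps D2 D1] key unfolding u_def by simp
  show "cmod z < cmod \<gamma> \<Longrightarrow> 1 - (cmod (w z))\<^sup>2 \<le> (1 - (cmod \<gamma>)\<^sup>2) * (1 - (cmod z)\<^sup>2) / (1 - cmod \<gamma> * cmod z)\<^sup>2"
    using real_bounds(2)[OF hyps D2 D1] key unfolding u_def by simp
qed

theorem mainTheorem5: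
  fixes \<beta> :: complex and f h g :: "complex \<Rightarrow> complex" and z :: complex
  assumes "Re \<beta> > -1/2"
    and "h holomorphic_on ball 0 1" and "g holomorphic_on ball 0 1"
    and "h 0 \<noteq> 0" and "g 0 = 1"
    and "\<forall>\<zeta>\<in>ball 0 1. f \<zeta> = \<zeta> * (complex_of_real (cmod \<zeta>)) powr (2 * \<beta>) * h \<zeta> * cnj (g \<zeta>)"
    and "log_harmonic_on (ball 0 1) f"
    and "z \<in> ball 0 1" and "f differentiable (at z)"
  shows "(let \<gamma> = cnj \<beta> / (1 + \<beta>) in
           (1 - (cmod \<gamma>)\<^sup>2) * (1 - (cmod z)\<^sup>2) / (1 + cmod \<gamma> * cmod z)\<^sup>2 * (cmod (wirt_z f z))\<^sup>2
             \<le> jacobian_c f z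
           \<and> jacobian_c f z \<le>
             (if cmod z < cmod \<gamma>
              then (1 - (cmod \<gamma>)\<^sup>2) * (1 - (cmod z)\<^sup>2) / (1 - cmod \<gamma> * cmod z)\<^sup>2 * (cmod (wirt_z f z))\<^sup>2
              else (cmod (wirt_z f z))\<^sup>2))"
proof -
  note b = assms(1) and hh = assms(2) and gh = assms(3) and h0 = assms(4) and g0 = assms(5)
    and feq = assms(6) and z = assms(8) and df = assms(9)
  obtain w where lh: "log_harmonic_dil (ball 0 1) f w"
    using assms(7) unfolding log_harmonic_on_def by auto
  have wh: "w holomorphic_on ball 0 1" and wl: "\<forall>z\<in>ball 0 1. cmod (w z) < 1"
    using lh unfolding log_harmonic_dil_def by auto
  define \<gamma> where "\<gamma> = cnj \<beta> / (1 + \<beta>)"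
  have b1: "1 + \<beta> \<noteq> 0"
  proof
    assume "1 + \<beta> = 0"
    then have "Re (1 + \<beta>) = 0" by simp
    then show False using b by simp
  qed
  have w0: "w 0 = \<gamma>"
  proof -
    have "cnj \<beta> * g 0 * h 0 + 0 * deriv g 0 * h 0 = w 0 * ((1 + \<beta>) * g 0 * h 0 + 0 * deriv h 0 * g 0)"
      by (rule PQ_lemma[OF hh gh h0 g0 feq lh]) simp
    then have "cnj \<beta> * h 0 = w 0 * (1 + \<beta>) * h 0" using g0 by simp
    then have "cnj \<beta> = w 0 * (1 + \<beta>)" using h0 by simp
    then show ?thesis unfolding \<gamma>_def using b1 by (simp add: field_simps)
  qed
  have rel: "cmod (wirt_zbar f z) = cmod (w z) * cmod (wirt_z f z)"
  proof (cases "z = 0")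
    case True
    show ?thesis
    proof (cases "\<beta> = 0")
      case True
      then have "w 0 = 0" using w0 unfolding \<gamma>_def by simp
      then show ?thesis using zero_case(1)[OF hh gh h0 g0 feq] df \<open>z = 0\<close> by simp
    next
      case False
      then show ?thesis using zero_case[OF hh gh h0 g0 feq] df \<open>z = 0\<close> by simp
    qed
  next
    case False
    define E where "E = (complex_of_real (cmod z)) powr (2 * \<beta>)"
    note D = f_deriv[OF hh gh feq z False]
    have A: "wirt_z f z = E * cnj (g z) * ((1 + \<beta>) * h z + z * deriv h z)"
      using wirt_from(1)[OF D] unfolding E_def .
    have B: "wirt_zbar f z = E * h z * (\<beta> * z * cnj (g z) / cnj z + z * cnj (deriv g z))"
      using wirt_from(2)[OF D] unfolding E_def .
    have PQz: "cnj \<beta> * g z * h z + z * deriv g z * h z = w z * ((1 + \<beta>) * g z * h z + z * deriv h z * g z)"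
      by (rule PQ_lemma[OF hh gh h0 g0 feq lh z])
    have inner: "\<beta> * z * cnj (g z) / cnj z + z * cnj (deriv g z) = (z / cnj z) * cnj (cnj \<beta> * g z + z * deriv g z)"
      using False by (simp add: field_simps)
    have zc: "cmod (z / cnj z) = 1" using False by (simp add: norm_divide)
    have "cmod (wirt_zbar f z) = cmod E * cmod (h z * (cnj \<beta> * g z + z * deriv g z))"
      unfolding B inner norm_mult zc complex_mod_cnj by simp
    also have "h z * (cnj \<beta> * g z + z * deriv g z) = w z * (g z * ((1 + \<beta>) * h z + z * deriv h z))"
      using PQz by (simp add: algebra_simps)
    also have "cmod E * cmod (w z * (g z * ((1 + \<beta>) * h z + z * deriv h z))) = cmod (w z) * cmod (wirt_z f z)"
      unfolding A by (simp add: norm_mult)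
    finally show ?thesis .
  qed
  have J: "jacobian_c f z = (cmod (wirt_z f z))\<^sup>2 * (1 - (cmod (w z))\<^sup>2)"
    unfolding jacobian_c_def rel by (simp add: power_mult_distrib algebra_simps)
  have fz: "0 \<le> (cmod (wirt_z f z))\<^sup>2" by simp
  note S = sp_bound[OF wh wl w0 z]
  have L: "(1 - (cmod \<gamma>)\<^sup>2) * (1 - (cmod z)\<^sup>2) / (1 + cmod \<gamma> * cmod z)\<^sup>2 * (cmod (wirt_z f z))\<^sup>2
             \<le> jacobian_c f z"
    unfolding J using mult_right_mono[OF S(1) fz] by (simp add: mult.commute)
  have U: "jacobian_c f z \<le>
             (if cmod z < cmod \<gamma>
              then (1 - (cmod \<gamma>)\<^sup>2) * (1 - (cmod z)\<^sup>2) / (1 - cmod \<gamma> * cmod z)\<^sup>2 * (cmod (wirt_z f z))\<^sup>2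
              else (cmod (wirt_z f z))\<^sup>2)"
  proof (cases "cmod z < cmod \<gamma>")
    case True
    then show ?thesis
      unfolding J using mult_right_mono[OF S(2)[OF True] fz] by (simp add: mult.commute)
  next
    case False
    have "(cmod (wirt_z f z))\<^sup>2 * (1 - (cmod (w z))\<^sup>2) \<le> (cmod (wirt_z f z))\<^sup>2 * 1"
      using fz by (intro mult_left_mono) auto
    then show ?thesis using False unfolding J by simp
  qed
  show ?thesis unfolding Let_def \<gamma>_def[symmetric] using L U by simp
qed

end
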